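(* Let $R$ be a DT ring. Then $6\in J(R)$.
   Context: All rings are associative with identity; $J(R)$ is the Jacobson radical, $U(R)$ the group of units. $\Delta(R)=\{x\in R: x+u\in U(R)\text{ for all }u\in U(R)\}$. $\mathrm{Tr}(R)=\{x\in R: x^3=x\}$. A ring $R$ is a DT ring if every $r\in R$ can be written $r=e+d$ with $e\in\mathrm{Tr}(R)$ and $d\in\Delta(R)$. *)

theory Defs
  imports Main
begin

definition units_of_ring :: "'a::ring_1 set" where
  "units_of_ring = {u. \<exists>v. u * v = 1 \<and> v * u = 1}"

definition left_ideal :: "'a::ring_1 set \<Rightarrow> bool" where
  "left_ideal I \<longleftrightarrow> 0 \<in> I \<and> (\<forall>x\<in>I. \<forall>y\<in>I. x + y \<in> I) \<and> (\<forall>x\<in>I. - x \<in> I)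
     \<and> (\<forall>r x. x \<in> I \<longrightarrow> r * x \<in> I)"

definition maximal_left_ideal :: "'a::ring_1 set \<Rightarrow> bool" where
  "maximal_left_ideal M \<longleftrightarrow> left_ideal M \<and> M \<noteq> UNIV \<and>
     (\<forall>I. left_ideal I \<and> M \<subseteq> I \<and> I \<noteq> UNIV \<longrightarrow> I = M)"

definition jacobson :: "'a::ring_1 set" where
  "jacobson = \<Inter> {M. maximal_left_ideal M}"

definition Delta :: "'a::ring_1 set" where
  "Delta = {x. \<forall>u\<in>units_of_ring. x + u \<in> units_of_ring}"

definition tripotents :: "'a::ring_1 set" where
  "tripotents = {x. x ^ 3 = x}"

definition DT_ring :: "'a::ring_1 itself \<Rightarrow> bool" where
  "DT_ring _ \<longleftrightarrow> (\<forall>r::'a. \<exists>e d. r = e + d \<and> e \<in> tripotents \<and> d \<in> Delta)"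

end

theory Submission
  imports Defs
begin

lemma U_mult: "u \<in> units_of_ring \<Longrightarrow> v \<in> units_of_ring \<Longrightarrow> (u*v::'a::ring_1) \<in> units_of_ring"
proof -
  assume "u \<in> units_of_ring" "v \<in> units_of_ring"
  then obtain u' v' where a: "u*u' = 1" "u'*u = 1" "v*v' = 1" "v'*v=1" unfolding units_of_ring_def by blast
  have "(u*v)*(v'*u') = 1" by (metis a(1) a(3) mult.assoc mult_1_left)
  moreover have "(v'*u')*(u*v) = 1" by (metis a(2) a(4) mult.assoc mult_1_left)
  ultimately show ?thesis unfolding units_of_ring_def by blast
qed

lemma U_one: "(1::'a::ring_1) \<in> units_of_ring" unfolding units_of_ring_def by auto

lemma U_neg: "u \<in> units_of_ring \<Longrightarrow> (-u::'a::ring_1) \<in> units_of_ring"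
proof -
  assume "u \<in> units_of_ring"
  then obtain v where "u*v = 1" "v*u = 1" unfolding units_of_ring_def by blast
  then have "(-u)*(-v) = 1" "(-v)*(-u) = 1" by simp_all
  then show ?thesis unfolding units_of_ring_def by blast
qed

lemma U_inv: "u \<in> units_of_ring \<Longrightarrow> \<exists>u'. u' \<in> units_of_ring \<and> u*u' = (1::'a::ring_1) \<and> u'*u = 1"
  unfolding units_of_ring_def by blast

lemma D_add: "x \<in> Delta \<Longrightarrow> y \<in> Delta \<Longrightarrow> (x+y::'a::ring_1) \<in> Delta"
  unfolding Delta_def by (simp add: add.assoc)

lemma D_neg: "x \<in> Delta \<Longrightarrow> (-x::'a::ring_1) \<in> Delta"
  unfolding Delta_def
proof safe
  fix u :: 'a assume h: "\<forall>u\<in>units_of_ring. x + u \<in> units_of_ring" "u \<in> units_of_ring"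
  have "x + (-u) \<in> units_of_ring" using h U_neg by blast
  then have "-(x + (-u)) \<in> units_of_ring" by (rule U_neg)
  then show "-x + u \<in> units_of_ring" by simp
qed

lemma D_diff: "x \<in> Delta \<Longrightarrow> y \<in> Delta \<Longrightarrow> (x-y::'a::ring_1) \<in> Delta"
  using D_add[OF _ D_neg] by (metis diff_conv_add_uminus)

lemma D_unitU: "x \<in> Delta \<Longrightarrow> u \<in> units_of_ring \<Longrightarrow> (x + u::'a::ring_1) \<in> units_of_ring"
  unfolding Delta_def by blast

lemma D_left: "x \<in> Delta \<Longrightarrow> u \<in> units_of_ring \<Longrightarrow> (u*x::'a::ring_1) \<in> Delta"
proof -
  assume x: "x \<in> Delta" and u: "u \<in> units_of_ring"
  obtain u' where u': "u' \<in> units_of_ring" "u*u' = 1" "u'*u = 1" using U_inv[OF u] by blast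
  show ?thesis unfolding Delta_def
  proof safe
    fix w :: 'a assume w: "w \<in> units_of_ring"
    have "x + u'*w \<in> units_of_ring" using D_unitU[OF x U_mult[OF u'(1) w]] .
    then have "u*(x + u'*w) \<in> units_of_ring" using U_mult[OF u] by blast
    moreover have "u*(x + u'*w) = u*x + w" by (simp add: distrib_left u'(2) mult.assoc[symmetric])
    ultimately show "u*x + w \<in> units_of_ring" by simp
  qed
qed

lemma D_right: "x \<in> Delta \<Longrightarrow> u \<in> units_of_ring \<Longrightarrow> (x*u::'a::ring_1) \<in> Delta"
proof -
  assume x: "x \<in> Delta" and u: "u \<in> units_of_ring"
  obtain u' where u': "u' \<in> units_of_ring" "u*u' = 1" "u'*u = 1" using U_inv[OF u] by blast
  show ?thesis unfolding Delta_def
  proof safe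
    fix w :: 'a assume w: "w \<in> units_of_ring"
    have "x + w*u' \<in> units_of_ring" using D_unitU[OF x U_mult[OF w u'(1)]] .
    then have "(x + w*u')*u \<in> units_of_ring" using U_mult[OF _ u] by blast
    moreover have "(x + w*u')*u = x*u + w" by (simp add: distrib_right u'(3) mult.assoc)
    ultimately show "x*u + w \<in> units_of_ring" by simp
  qed
qed

lemma D_one_plus: "a \<in> Delta \<Longrightarrow> c \<in> Delta \<Longrightarrow> (1 + a*c::'a::ring_1) \<in> units_of_ring"
proof -
  assume a: "a \<in> Delta" and c: "c \<in> Delta"
  have "(1+a)*(1+c) \<in> units_of_ring"
    using U_mult D_unitU[OF a U_one] D_unitU[OF c U_one] by (simp add: add.commute)
  then have "-(a+c) + (1+a)*(1+c) \<in> units_of_ring" using D_unitU D_neg D_add a c by blast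
  moreover have "-(a+c) + (1+a)*(1+c) = 1 + a*c" by (simp add: algebra_simps)
  ultimately show ?thesis by simp
qed

lemma D_mult: "x \<in> Delta \<Longrightarrow> y \<in> Delta \<Longrightarrow> (x*y::'a::ring_1) \<in> Delta"
proof -
  assume x: "x \<in> Delta" and y: "y \<in> Delta"
  show ?thesis unfolding Delta_def
  proof safe
    fix u :: 'a assume u: "u \<in> units_of_ring"
    obtain u' where u': "u' \<in> units_of_ring" "u*u' = 1" "u'*u = 1" using U_inv[OF u] by blast
    have "1 + x*(y*u') \<in> units_of_ring" using D_one_plus[OF x D_right[OF y u'(1)]] .
    then have "(1 + x*(y*u'))*u \<in> units_of_ring" using U_mult u by blast
    moreover have "(1 + x*(y*u'))*u = x*y + u" by (simp add: algebra_simps u'(3) mult.assoc)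
    ultimately show "x*y + u \<in> units_of_ring" by simp
  qed
qed

lemma six_e: assumes dt: "DT_ring TYPE('a::ring_1)" and e: "(e::'a)^3 = e"
  shows "6*e \<in> Delta"
proof -
  have e3: "e*e*e = e" using e by (simp add: power3_eq_cube)
  define u1 where "u1 = 1 - e*e + e"
  define u2 where "u2 = 1 - e*e - e"
  have h1: "e*(e*e) = e" using e3 by (simp add: mult.assoc)
  have h2: "e*(e*(e*x)) = e*x" for x using e3 by (metis mult.assoc)
  have "u1*u1 = 1" unfolding u1_def by (simp add: algebra_simps h1 h2)
  then have U1: "u1 \<in> units_of_ring" unfolding units_of_ring_def by blast
  have "u2*u2 = 1" unfolding u2_def by (simp add: algebra_simps h1 h2)
  then have U2: "u2 \<in> units_of_ring" unfolding units_of_ring_def by blast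
  define s where "s = e + e"
  have s_eq: "s = u1 - u2" unfolding s_def u1_def u2_def by (simp add: algebra_simps mult_2)
  have sL: "s*x \<in> Delta" if "x \<in> Delta" for x
    using D_diff[OF D_left[OF that U1] D_left[OF that U2]] by (simp add: s_eq algebra_simps)
  have sR: "x*s \<in> Delta" if "x \<in> Delta" for x
    using D_diff[OF D_right[OF that U1] D_right[OF that U2]] by (simp add: s_eq algebra_simps)
  obtain t d where td: "s = t + d" "t^3 = t" "d \<in> Delta"
    using dt unfolding DT_ring_def tripotents_def by blast
  have t: "t = s - d" using td by simp
  have "(s-d)*(s-d)*(s-d) = s - d" using td(2) t by (simp add: power3_eq_cube)
  then have eq: "s*s*s - s = s*s*d + s*d*s + d*s*s - s*d*d - d*s*d - d*d*s + d*d*d - d"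
    by (simp add: algebra_simps)
  have D1: "s*s*d \<in> Delta" using sL[OF sL[OF td(3)]] by (simp add: mult.assoc)
  have D2: "s*d*s \<in> Delta" using sR[OF sL[OF td(3)]] by (simp add: mult.assoc)
  have D3: "d*s*s \<in> Delta" using sR[OF sR[OF td(3)]] by (simp add: mult.assoc)
  have D4: "s*d*d \<in> Delta" using sL[OF D_mult[OF td(3) td(3)]] by (simp add: mult.assoc)
  have D5: "d*s*d \<in> Delta" using D_mult[OF sR[OF td(3)] td(3)] by (simp add: mult.assoc)
  have D6: "d*d*s \<in> Delta" using sR[OF D_mult[OF td(3) td(3)]] by (simp add: mult.assoc)
  have D7: "d*d*d \<in> Delta" using D_mult[OF D_mult[OF td(3) td(3)] td(3)] by simp
  have "s*s*s - s \<in> Delta" unfolding eq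
    by (intro D_diff D_add D1 D2 D3 D4 D5 D6 D7 td(3))
  moreover have "s*s*s - s = 6*e"
  proof -
    have "s*s*s = e+e+e+e+e+e+e+e" unfolding s_def by (simp only: distrib_left distrib_right e3 add.assoc)
    moreover have "6*e = e+e+e+e+e+e" by (simp only: numeral_Bit0 numeral_Bit1 numeral_One distrib_right mult_1_left add.assoc)
    ultimately show ?thesis unfolding s_def by (simp add: add.assoc)
  qed
  ultimately show ?thesis by simp
qed

lemma comm6: "(6::'a::ring_1)*x = x*6"
  by (metis mult_of_nat_commute of_nat_numeral)

lemma six_r: assumes dt: "DT_ring TYPE('a::ring_1)" shows "6*(r::'a) \<in> Delta"
proof -
  obtain e d where ed: "r = e + d" "e^3 = e" "d \<in> Delta"
    using dt unfolding DT_ring_def tripotents_def by blast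
  have "6*d = d+d+d+d+d+d" by (simp only: numeral_Bit0 numeral_Bit1 numeral_One distrib_right mult_1_left add.assoc)
  then have "6*d \<in> Delta" using D_add[OF D_add[OF D_add[OF D_add[OF D_add[OF ed(3) ed(3)] ed(3)] ed(3)] ed(3)] ed(3)] by simp
  then show ?thesis using D_add six_e[OF dt ed(2)] ed(1) by (simp add: distrib_left)
qed

theorem corollary2p8:
  assumes "DT_ring TYPE('a::ring_1)"
  shows "(6::'a) \<in> jacobson"
  unfolding jacobson_def
proof (rule InterI, simp)
  fix M :: "'a set" assume M: "maximal_left_ideal M"
  show "6 \<in> M"
  proof (rule ccontr)
    assume n6: "6 \<notin> M"
    have LM: "left_ideal M" using M maximal_left_ideal_def by blast
    have M0: "0 \<in> M" and Madd: "\<And>x y. x \<in> M \<Longrightarrow> y \<in> M \<Longrightarrow> x + y \<in> M"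
      and Mneg: "\<And>x. x \<in> M \<Longrightarrow> -x \<in> M" and Mmul: "\<And>r x. x \<in> M \<Longrightarrow> r*x \<in> M"
      using LM unfolding left_ideal_def by blast+
    define I where "I = {x. \<exists>m a. m \<in> M \<and> x = m + a*6}"
    have "left_ideal I" unfolding left_ideal_def
    proof (intro conjI ballI allI impI)
      have "0 = 0 + 0*(6::'a)" by simp
      then show "0 \<in> I" unfolding I_def using M0 by blast
    next
      fix x y assume "x \<in> I" "y \<in> I"
      then obtain m a m' a' where h: "x = m + a*6" "y = m' + a'*6" "m \<in> M" "m' \<in> M"
        unfolding I_def by blast
      have "x + y = (m + m') + (a+a')*6" using h by (simp add: algebra_simps)
      then show "x + y \<in> I" unfolding I_def using Madd[OF h(3) h(4)] by blast
    next
      fix x assume "x \<in> I"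
      then obtain m a where h: "x = m + a*6" "m \<in> M" unfolding I_def by blast
      have "-x = (-m) + (-a)*6" using h by (simp add: algebra_simps)
      then show "-x \<in> I" unfolding I_def using Mneg[OF h(2)] by blast
    next
      fix r x assume "x \<in> I"
      then obtain m a where h: "x = m + a*6" "m \<in> M" unfolding I_def by blast
      have "r*x = (r*m) + (r*a)*6" using h by (simp add: algebra_simps)
      then show "r*x \<in> I" unfolding I_def using Mmul[OF h(2)] by blast
    qed
    moreover have "M \<subseteq> I"
    proof
      fix x assume "x \<in> M"
      moreover have "x = x + 0*(6::'a)" by simp
      ultimately show "x \<in> I" unfolding I_def by blast
    qed
    moreover have "6 \<in> I"
    proof -
      have "(6::'a) = 0 + 1*6" by simp
      then show ?thesis unfolding I_def using M0 by blast
    qed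
    ultimately have "I = UNIV" using M n6 unfolding maximal_left_ideal_def by blast
    then have "1 \<in> I" by simp
    then obtain m a where ma: "1 = m + a*6" "m \<in> M" unfolding I_def by blast
    have "6*(-a) \<in> Delta" using six_r[OF assms] .
    then have "6*(-a) + 1 \<in> units_of_ring" using D_unitU U_one by blast
    moreover have "6*(-a) + 1 = m"
    proof -
      have "m = 1 - a*6" using ma(1) by (simp add: algebra_simps)
      then show ?thesis by (simp add: comm6)
    qed
    ultimately obtain v where v: "v*m = 1" unfolding units_of_ring_def by auto
    have "y \<in> M" for y
    proof -
      have "(y*v)*m \<in> M" using Mmul ma(2) by blast
      then show ?thesis using v by (simp add: mult.assoc)
    qed
    then show False using M unfolding maximal_left_ideal_def by blast
  qed
qed

end
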